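(* Let $\mathcal{O}$ be the fixed one-counter net described in the context and let the formulas $\psi_i$ ($i\ge1$) be as defined there. Then for all $n\ge0$ and $i\ge1$: $(\bar t,n)\models\psi_i$ if and only if $\mathrm{bit}_i(n)=1$.
   Context: $\mathrm{bit}_i(n)$ is the $i$-th least significant bit of $n$, i.e. $n=\sum_{i\ge1}2^{i-1}\mathrm{bit}_i(n)$. A one-counter net is a tuple $(Q,\{Q_p\},\delta_0,\delta_{>0})$ with $\delta_0\subseteq Q\times\{0,1\}\times Q$, $\delta_{>0}\subseteq Q\times\{-1,0,1\}\times Q$ and $\delta_0\subseteq\delta_{>0}$; its transition system has states $Q\times\mathbb{N}$, $(q,n)$ satisfies $p$ iff $q\in Q_p$, and $(q,n)\to(q',n+k)$ iff either $n=0$ and $(q,k,q')\in\delta_0$, or $n>0$ and $(q,k,q')\in\delta_{>0}$. The fixed net $\mathcal{O}$ has control locations $t,\bar t,q_0,q_1,q_2,q_3,f,g,p_0,p_1$; the atomic propositions are the control locations, each holding exactly at itself. $\delta_{>0}$ consists of $(q_0,-1,q_1)$, $(q_1,-1,q_2)$, $(q_2,-1,q_3)$, $(q_3,-1,q_0)$, $(q_1,-1,q_1)$, $(q_3,-1,q_3)$, $(q_0,0,t)$, $(t,0,q_0)$, $(q_2,0,t)$, $(q_1,0,\bar t)$, $(\bar t,0,q_1)$, $(\bar t,0,q_2)$, $(q_3,0,\bar t)$, $(\bar t,0,q_3)$, $(t,0,f)$, $(\bar t,-1,f)$, $(f,-1,g)$, $(g,-1,f)$, $(\bar t,1,p_1)$,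 $(p_1,1,p_1)$, $(p_1,0,\bar t)$, $(p_0,0,\bar t)$, $(\bar t,0,p_0)$; and $\delta_0=\{(\bar t,1,p_1),(p_0,0,\bar t),(\bar t,0,p_0),(t,0,q_0),(t,0,f)\}$. $\mathsf{CTL}$ is interpreted with standard semantics; $\mathsf{EF}\psi$ abbreviates $\exists\,\mathtt{true}\,\mathsf{U}\,\psi$. Let $\mathrm{test}=t\vee\bar t$, $\varphi_\diamond=q_0\vee q_1\vee q_2\vee q_3$, $\varphi_1=\mathrm{test}\wedge\exists\mathsf{X}\big(f\wedge\mathsf{EF}(f\wedge\neg\exists\mathsf{X}g)\big)$, and for $i>1$: $\mu_i=\exists(\varphi_\diamond\wedge\exists\mathsf{X}\varphi_{i-1})\,\mathsf{U}\,(q_0\wedge\neg\exists\mathsf{X}q_1)$, $\varphi_i=\mathrm{test}\wedge\exists\mathsf{X}\mu_i$. Finally $\psi_1=\varphi_1$ and $\psi_i=\bar t\wedge\exists\mathsf{X}\big((q_1\vee q_2)\wedge\mu_i\big)$ for $i>1$. *)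

theory Defs
  imports Main
begin

definition bitn :: "nat \<Rightarrow> nat \<Rightarrow> nat" where
  "bitn i n = (n div 2 ^ (i - 1)) mod 2"

text \<open>A one-counter net: transitions at counter zero (d0) and at positive counter (dpos),
  each a set of triples (q, k, q') with k an integer displacement; states are pairs
  (control location, counter value).\<close>
record 'q ocn =
  delta0 :: "('q \<times> int \<times> 'q) set"
  deltapos :: "('q \<times> int \<times> 'q) set"

definition ocn_step :: "'q ocn \<Rightarrow> ('q \<times> nat) \<Rightarrow> ('q \<times> nat) \<Rightarrow> bool" where
  "ocn_step N s s' \<longleftrightarrow>
     (snd s = 0 \<and> (\<exists>k. (fst s, k, fst s') \<in> delta0 N \<and> int (snd s') = int (snd s) + k)) \<or>
     (snd s > 0 \<and> (\<exists>k. (fst s, k, fst s') \<in> deltapos N \<and> int (snd s') = int (snd s) + k))"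

datatype 'ap ctl =
    Atom 'ap
  | TT
  | Neg "'ap ctl"
  | Conj "'ap ctl" "'ap ctl"
  | Disj "'ap ctl" "'ap ctl"
  | ExX "'ap ctl"
  | ExU "'ap ctl" "'ap ctl"

primrec sat :: "('s \<Rightarrow> 's \<Rightarrow> bool) \<Rightarrow> ('s \<Rightarrow> 'ap \<Rightarrow> bool) \<Rightarrow> 's \<Rightarrow> 'ap ctl \<Rightarrow> bool" where
  "sat R L s (Atom p) = L s p"
| "sat R L s TT = True"
| "sat R L s (Neg \<phi>) = (\<not> sat R L s \<phi>)"
| "sat R L s (Conj \<phi> \<psi>) = (sat R L s \<phi> \<and> sat R L s \<psi>)"
| "sat R L s (Disj \<phi> \<psi>) = (sat R L s \<phi> \<or> sat R L s \<psi>)"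
| "sat R L s (ExX \<phi>) = (\<exists>s'. R s s' \<and> sat R L s' \<phi>)"
| "sat R L s (ExU \<phi> \<psi>) =
     (\<exists>(p :: nat \<Rightarrow> 's) k. p 0 = s \<and> (\<forall>j<k. R (p j) (p (Suc j))) \<and>
        sat R L (p k) \<psi> \<and> (\<forall>j<k. sat R L (p j) \<phi>))"

abbreviation ExF :: "'ap ctl \<Rightarrow> 'ap ctl" where
  "ExF \<psi> \<equiv> ExU TT \<psi>"

datatype loc = t | tb | q0 | q1 | q2 | q3 | f | g | p0 | p1

definition O_net :: "loc ocn" where
  "O_net = \<lparr> delta0 = {(tb,1,p1), (p0,0,tb), (tb,0,p0), (t,0,q0), (t,0,f)},
             deltapos = {(q0,-1,q1), (q1,-1,q2), (q2,-1,q3), (q3,-1,q0), (q1,-1,q1), (q3,-1,q3),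
               (q0,0,t), (t,0,q0), (q2,0,t), (q1,0,tb), (tb,0,q1), (tb,0,q2), (q3,0,tb), (tb,0,q3),
               (t,0,f), (tb,-1,f), (f,-1,g), (g,-1,f), (tb,1,p1), (p1,1,p1), (p1,0,tb),
               (p0,0,tb), (tb,0,p0)} \<rparr>"

definition O_lab :: "loc \<times> nat \<Rightarrow> loc \<Rightarrow> bool" where
  "O_lab s p \<longleftrightarrow> fst s = p"

definition O_sat :: "loc \<times> nat \<Rightarrow> loc ctl \<Rightarrow> bool" where
  "O_sat s \<phi> = sat (ocn_step O_net) O_lab s \<phi>"

definition test :: "loc ctl" where "test = Disj (Atom t) (Atom tb)"

definition diamond :: "loc ctl" where
  "diamond = Disj (Atom q0) (Disj (Atom q1) (Disj (Atom q2) (Atom q3)))"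

definition phi1 :: "loc ctl" where
  "phi1 = Conj test (ExX (Conj (Atom f) (ExF (Conj (Atom f) (Neg (ExX (Atom g)))))))"

definition mu_of :: "loc ctl \<Rightarrow> loc ctl" where
  "mu_of \<phi> = ExU (Conj diamond (ExX \<phi>)) (Conj (Atom q0) (Neg (ExX (Atom q1))))"

text \<open>phi i for i >= 1 (phi 0 is an irrelevant dummy value).\<close>
fun phi :: "nat \<Rightarrow> loc ctl" where
  "phi 0 = TT"
| "phi (Suc 0) = phi1"
| "phi (Suc (Suc j)) = Conj test (ExX (mu_of (phi (Suc j))))"

definition mu :: "nat \<Rightarrow> loc ctl" where
  "mu i = mu_of (phi (i - 1))"

fun psi :: "nat \<Rightarrow> loc ctl" where
  "psi 0 = TT"
| "psi (Suc 0) = phi 1"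
| "psi (Suc (Suc j)) = Conj (Atom tb) (ExX (Conj (Disj (Atom q1) (Atom q2)) (mu (Suc (Suc j)))))"

end

theory Submission
  imports Defs
begin



lemma sat_EU_unfold: "sat R L s (ExU a b) \<longleftrightarrow>
   sat R L s b \<or> (sat R L s a \<and> (\<exists>s'. R s s' \<and> sat R L s' (ExU a b)))"
proof
  assume "sat R L s (ExU a b)"
  then obtain p k where p: "p 0 = s" "\<forall>j<k. R (p j) (p (Suc j))" "sat R L (p k) b"
      "\<forall>j<k. sat R L (p j) a" by auto
  show "sat R L s b \<or> (sat R L s a \<and> (\<exists>s'. R s s' \<and> sat R L s' (ExU a b)))"
  proof (cases k)
    case 0 then show ?thesis using p by auto
  next
    case (Suc k')
    have "sat R L (p 1) (ExU a b)"
      using p Suc by (auto intro!: exI[of _ "\<lambda>j. p (Suc j)"] exI[of _ k'])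
    moreover have "R s (p 1)" "sat R L s a" using p Suc by auto
    ultimately show ?thesis by blast
  qed
next
  assume "sat R L s b \<or> (sat R L s a \<and> (\<exists>s'. R s s' \<and> sat R L s' (ExU a b)))"
  then show "sat R L s (ExU a b)"
  proof
    assume "sat R L s b"
    then show ?thesis by (auto intro!: exI[of _ "\<lambda>_. s"] exI[of _ 0])
  next
    assume "sat R L s a \<and> (\<exists>s'. R s s' \<and> sat R L s' (ExU a b))"
    then obtain s' p k where h: "sat R L s a" "R s s'" "p 0 = s'" "\<forall>j<k. R (p j) (p (Suc j))"
      "sat R L (p k) b" "\<forall>j<k. sat R L (p j) a" by auto
    define p' where "p' = (\<lambda>j. if j = 0 then s else p (j - 1))"
    have "p' 0 = s" by (simp add: p'_def)
    moreover have "\<forall>j<Suc k. R (p' j) (p' (Suc j))"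
      using h by (auto simp: p'_def less_Suc_eq_0_disj)
    moreover have "sat R L (p' (Suc k)) b" using h by (simp add: p'_def)
    moreover have "\<forall>j<Suc k. sat R L (p' j) a"
      using h by (auto simp: p'_def less_Suc_eq_0_disj)
    ultimately show ?thesis by (simp only: sat.simps) blast
  qed
qed



definition jloc :: "nat \<Rightarrow> nat \<Rightarrow> loc" where
  "jloc K c = (if c mod K = 0 then (if even (c div K) then q0 else q2)
               else (if even (c div K) then q3 else q1))"

lemma jloc_eq: "0 < K \<Longrightarrow> r < K \<Longrightarrow>
  jloc K (K*a+r) = (if r = 0 then (if even a then q0 else q2) else (if even a then q3 else q1))"
  by (simp add: jloc_def)

lemma jloc_q0: "0 < K \<Longrightarrow> jloc K c = q0 \<longleftrightarrow> (2*K) dvd c"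
proof -
  assume K: "0 < K"
  have "c mod (K*2) = K * (c div K mod 2) + c mod K" by (rule mod_mult2_eq)
  then have "(2*K) dvd c \<longleftrightarrow> c mod K = 0 \<and> c div K mod 2 = 0"
    using K by (auto simp: dvd_eq_mod_eq_0 mult.commute)
  then show ?thesis by (auto simp: jloc_def)
qed

lemma jloc_dia: "jloc K c \<in> {q0,q1,q2,q3}" by (auto simp: jloc_def)

lemma jloc_q12: "jloc K c \<in> {q1,q2} \<longleftrightarrow> odd (c div K)" by (auto simp: jloc_def)

lemma jloc_step:
  assumes K: "2 \<le> K"
  shows "(q0 = jloc K (Suc m)) \<longleftrightarrow> K dvd Suc m \<and> jloc K m = q1"
    and "(q1 = jloc K (Suc m)) \<longleftrightarrow> \<not> K dvd Suc m \<and> (jloc K m = q2 \<or> jloc K m = q1)"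
    and "(q2 = jloc K (Suc m)) \<longleftrightarrow> K dvd Suc m \<and> jloc K m = q3"
    and "(q3 = jloc K (Suc m)) \<longleftrightarrow> \<not> K dvd Suc m \<and> (jloc K m = q0 \<or> jloc K m = q3)"
proof -
  define a where "a = Suc m div K"
  define r where "r = Suc m mod K"
  have K0: "0 < K" using K by simp
  have e: "Suc m = K*a + r" by (simp add: a_def r_def)
  have rK: "r < K" using K0 by (simp add: r_def)
  have dv: "K dvd Suc m \<longleftrightarrow> r = 0" by (simp add: r_def dvd_eq_mod_eq_0)
  have "((q0 = jloc K (Suc m)) = (K dvd Suc m \<and> jloc K m = q1))
    \<and> (q1 = jloc K (Suc m)) = (\<not> K dvd Suc m \<and> (jloc K m = q2 \<or> jloc K m = q1))
    \<and> (q2 = jloc K (Suc m)) = (K dvd Suc m \<and> jloc K m = q3)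
    \<and> (q3 = jloc K (Suc m)) = (\<not> K dvd Suc m \<and> (jloc K m = q0 \<or> jloc K m = q3))"
  proof (cases "r = 0")
    case True
    then have a0: "a > 0" using e by (cases a) auto
    have m: "m = K*(a-1) + (K-1)" using e True a0 K
      by (cases a) (auto simp: algebra_simps)
    have jm: "jloc K m = (if even (a-1) then q3 else q1)"
      unfolding m using K by (subst jloc_eq) auto
    have js: "jloc K (Suc m) = (if even a then q0 else q2)"
      unfolding e using K0 rK True by (subst jloc_eq) auto
    show ?thesis using a0 True dv jm js by (cases a) auto
  next
    case False
    have m: "m = K*a + (r-1)" using e False by simp
    have jm: "jloc K m = (if r - 1 = 0 then (if even a then q0 else q2) else (if even a then q3 else q1))"
      unfolding m using K0 rK by (subst jloc_eq) auto
    have js: "jloc K (Suc m) = (if even a then q3 else q1)"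
      unfolding e using K0 rK False by (subst jloc_eq) auto
    show ?thesis using False dv jm js by auto
  qed
  then show "(q0 = jloc K (Suc m)) \<longleftrightarrow> K dvd Suc m \<and> jloc K m = q1"
    and "(q1 = jloc K (Suc m)) \<longleftrightarrow> \<not> K dvd Suc m \<and> (jloc K m = q2 \<or> jloc K m = q1)"
    and "(q2 = jloc K (Suc m)) \<longleftrightarrow> K dvd Suc m \<and> jloc K m = q3"
    and "(q3 = jloc K (Suc m)) \<longleftrightarrow> \<not> K dvd Suc m \<and> (jloc K m = q0 \<or> jloc K m = q3)"
    by blast+
qed



lemma step_gen: "ocn_step N (l,n) (l',n') \<longleftrightarrow>
  (n = 0 \<and> (l, int n' - int n, l') \<in> delta0 N) \<or> (n > 0 \<and> (l, int n' - int n, l') \<in> deltapos N)"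
  unfolding ocn_step_def by (auto simp: algebra_simps)

lemma st_t: "ocn_step O_net (t,n) (l',n') \<longleftrightarrow> (l',n') = (q0,n) \<or> (l',n') = (f,n)"
  unfolding step_gen by (cases l'; simp add: O_net_def; arith?)
lemma st_tb: "ocn_step O_net (tb,n) (l',n') \<longleftrightarrow>
   (n = 0 \<and> ((l',n') = (p1,1) \<or> (l',n') = (p0,0))) \<or>
   (n > 0 \<and> ((l',n') = (q1,n) \<or> (l',n') = (q2,n) \<or> (l',n') = (q3,n) \<or> (l',n') = (f,n-1) \<or> (l',n') = (p1,n+1) \<or> (l',n') = (p0,n)))"
  unfolding step_gen by (cases l'; simp add: O_net_def; arith?)
lemma st_q0: "ocn_step O_net (q0,n) (l',n') \<longleftrightarrow> n > 0 \<and> ((l',n') = (q1,n-1) \<or> (l',n') = (t,n))"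
  unfolding step_gen by (cases l'; simp add: O_net_def; arith?)
lemma st_q1: "ocn_step O_net (q1,n) (l',n') \<longleftrightarrow> n > 0 \<and> ((l',n') = (q2,n-1) \<or> (l',n') = (q1,n-1) \<or> (l',n') = (tb,n))"
  unfolding step_gen by (cases l'; simp add: O_net_def; arith?)
lemma st_q2: "ocn_step O_net (q2,n) (l',n') \<longleftrightarrow> n > 0 \<and> ((l',n') = (q3,n-1) \<or> (l',n') = (t,n))"
  unfolding step_gen by (cases l'; simp add: O_net_def; arith?)
lemma st_q3: "ocn_step O_net (q3,n) (l',n') \<longleftrightarrow> n > 0 \<and> ((l',n') = (q0,n-1) \<or> (l',n') = (q3,n-1) \<or> (l',n') = (tb,n))"
  unfolding step_gen by (cases l'; simp add: O_net_def; arith?)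
lemma st_f: "ocn_step O_net (f,n) (l',n') \<longleftrightarrow> n > 0 \<and> (l',n') = (g,n-1)"
  unfolding step_gen by (cases l'; simp add: O_net_def; arith?)
lemma st_g: "ocn_step O_net (g,n) (l',n') \<longleftrightarrow> n > 0 \<and> (l',n') = (f,n-1)"
  unfolding step_gen by (cases l'; simp add: O_net_def; arith?)


lemma os_atom[simp]: "O_sat (l,n) (Atom p) \<longleftrightarrow> l = p" by (simp add: O_sat_def O_lab_def)
lemma os_TT[simp]: "O_sat s TT" by (simp add: O_sat_def)
lemma os_neg[simp]: "O_sat s (Neg a) \<longleftrightarrow> \<not> O_sat s a" by (simp add: O_sat_def)
lemma os_conj[simp]: "O_sat s (Conj a b) \<longleftrightarrow> O_sat s a \<and> O_sat s b" by (simp add: O_sat_def)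
lemma os_disj[simp]: "O_sat s (Disj a b) \<longleftrightarrow> O_sat s a \<or> O_sat s b" by (simp add: O_sat_def)
lemma os_ex: "O_sat (l,n) (ExX a) \<longleftrightarrow> (\<exists>l' n'. ocn_step O_net (l,n) (l',n') \<and> O_sat (l',n') a)"
  by (simp add: O_sat_def)
lemma os_U: "O_sat (l,n) (ExU a b) \<longleftrightarrow> O_sat (l,n) b \<or>
   (O_sat (l,n) a \<and> (\<exists>l' n'. ocn_step O_net (l,n) (l',n') \<and> O_sat (l',n') (ExU a b)))"
  unfolding O_sat_def by (subst sat_EU_unfold) auto

lemmas sts = st_t st_tb st_q0 st_q1 st_q2 st_q3 st_f st_g



definition X1 :: "loc ctl" where "X1 = Conj (Atom f) (Neg (ExX (Atom g)))"

lemma X1_sat: "O_sat (l,m) X1 \<longleftrightarrow> l = f \<and> m = 0"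
  by (cases l) (auto simp: X1_def os_ex st_f)

lemma F_chain: "O_sat (f,m) (ExF X1) \<longleftrightarrow> even m"
proof (induction m rule: less_induct)
  case (less m)
  have g: "O_sat (g,k) (ExF X1) \<longleftrightarrow> k > 0 \<and> O_sat (f,k-1) (ExF X1)" for k
    by (subst os_U) (auto simp: X1_sat st_g)
  have "O_sat (f,m) (ExF X1) \<longleftrightarrow> m = 0 \<or> (m > 1 \<and> O_sat (f,m-2) (ExF X1))"
    by (subst os_U) (auto simp: X1_sat st_f g numeral_2_eq_2)
  also have "\<dots> \<longleftrightarrow> even m"
    using less[of "m-2"] by (cases m) (auto, presburger+)
  finally show ?case .
qed

lemma phi_test: "1 \<le> j \<Longrightarrow> O_sat (l,m) (phi j) \<Longrightarrow> l = t \<or> l = tb"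
  by (cases j rule: phi.cases) (auto simp: phi1_def test_def)

definition P :: "nat \<Rightarrow> bool" where
  "P j \<longleftrightarrow> (\<forall>c. (O_sat (t,c) (phi j) \<longleftrightarrow> 2^j dvd c) \<and> (O_sat (tb,c) (phi j) \<longleftrightarrow> \<not> 2^j dvd c))"

lemma P1: "P 1"
proof -
  have a: "O_sat (t,c) (phi 1) \<longleftrightarrow> even c" for c
    using F_chain[of c] by (auto simp: phi1_def test_def os_ex st_t X1_def)
  have b: "O_sat (tb,c) (phi 1) \<longleftrightarrow> odd c" for c
    using F_chain[of "c-1"] by (cases c) (auto simp: phi1_def test_def os_ex st_tb X1_def)
  show ?thesis using a b by (simp add: P_def)
qed



lemma mu_nondia: "l \<notin> {q0,q1,q2,q3} \<Longrightarrow> \<not> O_sat (l,m) (mu_of a)"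
  unfolding mu_of_def by (subst os_U) (auto simp: diamond_def)

lemma mu_char:
  assumes j: "1 \<le> j" and Pj: "P j"
  shows "O_sat (l,m) (mu_of (phi j)) \<longleftrightarrow> l \<in> {q0,q1,q2,q3} \<and> l = jloc (2^j) m"
proof (induction m arbitrary: l)
  case 0
  show ?case
    by (subst mu_of_def, subst os_U, cases l)
       (auto simp: diamond_def os_ex sts jloc_def)
next
  case (Suc m)
  have K: "2 \<le> (2::nat)^j" using j by (cases j) auto
  have nt: "\<not> O_sat (l',n') (phi j)" if "l' \<noteq> t" "l' \<noteq> tb" for l' n'
    using phi_test[OF j] that by blast
  have Pt: "O_sat (t,c) (phi j) \<longleftrightarrow> 2^j dvd c" and Ptb: "O_sat (tb,c) (phi j) \<longleftrightarrow> \<not> 2^j dvd c" for c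
    using Pj by (auto simp: P_def)
  have mnd: "\<not> O_sat (t,c) (mu_of (phi j))" "\<not> O_sat (tb,c) (mu_of (phi j))" for c
    by (auto intro!: mu_nondia)
  show ?case
  proof (cases "l \<in> {q0,q1,q2,q3}")
    case False then show ?thesis using mu_nondia by blast
  next
    case True
    have u: "O_sat (l, Suc m) (mu_of (phi j)) \<longleftrightarrow>
      (O_sat (l, Suc m) (Conj (Atom q0) (Neg (ExX (Atom q1)))) \<or>
      (O_sat (l, Suc m) (Conj diamond (ExX (phi j))) \<and>
        (\<exists>l' n'. ocn_step O_net (l, Suc m) (l',n') \<and> O_sat (l',n') (mu_of (phi j)))))"
      by (subst mu_of_def, subst os_U, simp only: mu_of_def)
    have ex: "(\<exists>l' n'. ocn_step O_net (l, Suc m) (l',n') \<and> O_sat (l',n') (mu_of (phi j))) \<longleftrightarrow>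
      (l = q0 \<and> jloc (2^j) m = q1) \<or> (l = q1 \<and> (jloc (2^j) m = q2 \<or> jloc (2^j) m = q1))
      \<or> (l = q2 \<and> jloc (2^j) m = q3) \<or> (l = q3 \<and> (jloc (2^j) m = q0 \<or> jloc (2^j) m = q3))"
      using True apply (cases l) apply (simp_all add: sts conj_disj_distribR ex_disj_distrib Suc.IH mnd)
      apply auto
      done
    have x: "O_sat (l, Suc m) (ExX (phi j)) \<longleftrightarrow>
      (l \<in> {q0,q2} \<and> 2^j dvd Suc m) \<or> (l \<in> {q1,q3} \<and> \<not> 2^j dvd Suc m)"
      using True apply (cases l) apply (simp_all add: os_ex sts conj_disj_distribR ex_disj_distrib Pt Ptb nt)
      done
    have fin: "\<not> O_sat (l, Suc m) (Conj (Atom q0) (Neg (ExX (Atom q1))))"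
      by (simp add: os_ex st_q0)
    show ?thesis
      unfolding u using fin True jloc_step[OF K, of m]
      apply (simp only: os_conj x ex)
      apply (simp add: diamond_def)
      apply (cases l; auto)
      done
  qed
qed




lemma P_Suc: "1 \<le> j \<Longrightarrow> P j \<Longrightarrow> P (Suc j)"
proof -
  assume j: "1 \<le> j" and Pj: "P j"
  obtain j' where j': "j = Suc j'" using j by (cases j) auto
  have K: "0 < (2::nat)^j" by simp
  have ph: "phi (Suc j) = Conj test (ExX (mu_of (phi j)))" using j' by simp
  note mc = mu_char[OF j Pj]
  have a: "O_sat (t,c) (phi (Suc j)) \<longleftrightarrow> 2^(Suc j) dvd c" for c
  proof -
    have "O_sat (t,c) (phi (Suc j)) \<longleftrightarrow> q0 = jloc (2^j) c"
      by (simp add: ph test_def os_ex st_t conj_disj_distribR ex_disj_distrib mc)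
    then show ?thesis using jloc_q0[OF K, of c] by (auto simp: mult.commute)
  qed
  have b: "O_sat (tb,c) (phi (Suc j)) \<longleftrightarrow> \<not> 2^(Suc j) dvd c" for c
  proof (cases "c = 0")
    case True
    then show ?thesis
      by (simp add: ph test_def os_ex st_tb conj_disj_distribR ex_disj_distrib mc)
  next
    case False
    then have "O_sat (tb,c) (phi (Suc j)) \<longleftrightarrow> q1 = jloc (2^j) c \<or> q2 = jloc (2^j) c \<or> q3 = jloc (2^j) c"
      by (simp add: ph test_def os_ex st_tb conj_disj_distribR ex_disj_distrib mc)
    then show ?thesis using jloc_q0[OF K, of c] jloc_dia[of "2^j" c] by (auto simp: mult.commute)
  qed
  show "P (Suc j)" using a b by (simp add: P_def)
qed

lemma P_all: "1 \<le> j \<Longrightarrow> P j"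
proof (induction j)
  case 0 then show ?case by simp
next
  case (Suc j) then show ?case
    using P1 P_Suc by (cases "j = 0") auto
qed

theorem lemma2:
  fixes n i :: nat
  assumes "i \<ge> 1"
  shows "O_sat (tb, n) (psi i) \<longleftrightarrow> bitn i n = 1"
proof (cases i rule: psi.cases)
  case 1 then show ?thesis using assms by simp
next
  case 2
  have h: "O_sat (tb,n) (phi 1) \<longleftrightarrow> \<not> 2^1 dvd n" using P1 unfolding P_def by blast
  have b: "bitn i n = n mod 2" by (simp add: 2 bitn_def)
  show ?thesis using h unfolding b by (simp add: 2 odd_iff_mod_2_eq_one)
next
  case (3 j)
  have j1: "1 \<le> Suc j" by simp
  note mc = mu_char[OF j1 P_all[OF j1]]
  have mu: "mu (Suc (Suc j)) = mu_of (phi (Suc j))" by (simp add: mu_def)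
  have bit: "bitn i n = 1 \<longleftrightarrow> odd (n div 2^(Suc j))"
    using 3 by (auto simp: bitn_def odd_iff_mod_2_eq_one)
  show ?thesis
  proof (cases "n = 0")
    case True
    then show ?thesis
      by (simp add: 3 mu bitn_def os_ex st_tb conj_disj_distribR ex_disj_distrib mc)
  next
    case False
    then have "O_sat (tb, n) (psi i) \<longleftrightarrow> q1 = jloc (2^Suc j) n \<or> q2 = jloc (2^Suc j) n"
      by (simp add: 3 mu os_ex st_tb conj_disj_distribR ex_disj_distrib mc)
    then show ?thesis using jloc_q12[of "2^Suc j" n] bit by auto
  qed
qed


end
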